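(* Let $\Gamma$ be a gain operator on $\ell^\infty_+(\mathcal I)$ such that (i) $\Gamma$ satisfies the $\oplus$-MBI property, and (ii) for every $r\ge0$, the maximal fixed point $\sigma^*(r)$ of $\Gamma^\oplus_{r\mathbf 1}(s):=r\mathbf 1\oplus\Gamma(s)$ is semi-attractive from above, i.e. $\|(\Gamma^\oplus_{r\mathbf 1})^n(s)-\sigma^*(r)\|\to0$ for every $s\ge\sigma^*(r)$. Then there exists a $C^0$-path of decay for $\Gamma$.
   Context: Let $\mathcal I$ be a nonempty countable index set; $\ell^\infty_+(\mathcal I)$ is the cone of nonnegative real families $s=(s_i)_{i\in\mathcal I}$ with $\|s\|:=\sup_i|s_i|<\infty$, ordered componentwise; $\mathbf 1$ is the all-ones vector; $\oplus$ is the componentwise maximum. $\mathcal K_\infty$: continuous strictly increasing unbounded $\gamma:\mathbb R_+\to\mathbb R_+$ with $\gamma(0)=0$. For $\mathcal J\subset\mathcal I$, $s_{|\mathcal J}$ agrees with $s$ on $\mathcal J$ and is $0$ elsewhere. Gain operator: for each $i$ a finite (possibly empty) $\mathcal I_i\subset\mathcal I\setminus\{i\}$; directed graph $\mathcal G$ with vertices $\mathcal I$ and edges $ji$, $j\in\mathcal I_i$; a pointwise equicontinuous family $\gamma_{ij}\in\mathcal K_\infty$ ($ji\in E(\mathcal G)$); functions $\mu_i:\ell^\infty_+(\mathcal I)\to[0,\infty]$ with (M1) some $\xi\in\mathcal K_\infty$ has $\mu_i(0)=0$, $\mu_i(s)\ge\xi(\|s\|)$; (M2) $\mu_i$ monotone;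 (M3) for each finite $\mathcal J$, $\mu_i$ restricted to vectors vanishing off $\mathcal J$ is finite-valued and continuous; (M4) for each norm-bounded $A$ and $\varepsilon>0$ there is $\delta>0$ with $\sup_i|\mu_i(s_{|\mathcal I_i})-\mu_i(s^0_{|\mathcal I_i})|\le\varepsilon$ whenever $s^0\in A$, $\|s-s^0\|\le\delta$. $\Gamma_i(s):=\mu_i([\gamma_{ij}(s_j)]_{j\in\mathcal I_i})$ (argument zero outside $\mathcal I_i$). $\oplus$-MBI property: there is $\varphi\in\mathcal K_\infty$ such that for all $s,b$, $s\le b\oplus\Gamma(s)$ implies $\|s\|\le\varphi(\|b\|)$; under this property each operator $s\mapsto b\oplus\Gamma(s)$ has a maximal fixed point (one dominating every fixed point). $\Psi(\Gamma):=\{s:\Gamma(s)\le s\}$. A $C^0$-path of decay for $\Gamma$ is a path $\sigma:\mathbb R_+\to\ell^\infty_+(\mathcal I)$ with $\sigma(r)\in\Psi(\Gamma)$ for all $r$, $\varphi_{\min}(r)\mathbf 1\le\sigma(r)\le\varphi_{\max}(r)\mathbf 1$ for some $\varphi_{\min},\varphi_{\max}\in\mathcal K_\infty$, increasing and norm-continuous. *)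

theory Defs
  imports "HOL-Analysis.Analysis" "HOL-Library.Countable" "HOL-Library.Extended_Nonnegative_Real"
begin

text \<open>Elements of l-infinity_+(I) are functions 'i => real; the index set is the
  (countable, automatically nonempty) type 'i.\<close>

definition linf_pos :: "('i \<Rightarrow> real) \<Rightarrow> bool" where
  "linf_pos s \<longleftrightarrow> (\<forall>i. 0 \<le> s i) \<and> bdd_above (range (\<lambda>i. \<bar>s i\<bar>))"

definition supnorm :: "('i \<Rightarrow> real) \<Rightarrow> real" where
  "supnorm s = (SUP i. \<bar>s i\<bar>)"

definition Kinf :: "(real \<Rightarrow> real) \<Rightarrow> bool" where
  "Kinf g \<longleftrightarrow> continuous_on {0..} g \<and> strict_mono_on {0..} g \<and> g 0 = 0
     \<and> (\<forall>M. \<exists>x\<ge>0. g x > M)"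

definition restr :: "'i set \<Rightarrow> ('i \<Rightarrow> real) \<Rightarrow> ('i \<Rightarrow> real)" where
  "restr J s = (\<lambda>i. if i \<in> J then s i else 0)"

definition omax :: "('i \<Rightarrow> real) \<Rightarrow> ('i \<Rightarrow> real) \<Rightarrow> ('i \<Rightarrow> real)" where
  "omax s t = (\<lambda>i. max (s i) (t i))"

definition gvec :: "('i \<Rightarrow> 'i set) \<Rightarrow> ('i \<Rightarrow> 'i \<Rightarrow> real \<Rightarrow> real) \<Rightarrow> 'i \<Rightarrow> ('i \<Rightarrow> real) \<Rightarrow> ('i \<Rightarrow> real)" where
  "gvec Ii gam i s = (\<lambda>j. if j \<in> Ii i then gam i j (s j) else 0)"

text \<open>Gain operator Gamma_i(s) = mu_i([gamma_ij(s_j)]_{j in I_i}); finite-valued by (M3).\<close>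
definition Gam :: "('i \<Rightarrow> 'i set) \<Rightarrow> ('i \<Rightarrow> 'i \<Rightarrow> real \<Rightarrow> real) \<Rightarrow> ('i \<Rightarrow> ('i \<Rightarrow> real) \<Rightarrow> ennreal)
     \<Rightarrow> ('i \<Rightarrow> real) \<Rightarrow> ('i \<Rightarrow> real)" where
  "Gam Ii gam mu s = (\<lambda>i. enn2real (mu i (gvec Ii gam i s)))"

definition gain_operator :: "('i \<Rightarrow> 'i set) \<Rightarrow> ('i \<Rightarrow> 'i \<Rightarrow> real \<Rightarrow> real) \<Rightarrow> ('i \<Rightarrow> ('i \<Rightarrow> real) \<Rightarrow> ennreal) \<Rightarrow> bool" where
  "gain_operator Ii gam mu \<longleftrightarrow>
     (\<forall>i. finite (Ii i) \<and> i \<notin> Ii i)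
   \<and> (\<forall>i j. j \<in> Ii i \<longrightarrow> Kinf (gam i j))
   \<and> (\<forall>r\<ge>0. \<forall>\<epsilon>>0. \<exists>\<delta>>0. \<forall>i j r'. j \<in> Ii i \<and> r' \<ge> 0 \<and> \<bar>r' - r\<bar> < \<delta>
          \<longrightarrow> \<bar>gam i j r' - gam i j r\<bar> < \<epsilon>)
   \<comment> \<open>(M1)\<close>
   \<and> (\<exists>\<xi>. Kinf \<xi> \<and> (\<forall>i. mu i (\<lambda>_. 0) = 0 \<and>
          (\<forall>s. linf_pos s \<longrightarrow> ennreal (\<xi> (supnorm s)) \<le> mu i s)))
   \<comment> \<open>(M2)\<close>
   \<and> (\<forall>i s t. linf_pos s \<and> linf_pos t \<and> s \<le> t \<longrightarrow> mu i s \<le> mu i t)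
   \<comment> \<open>(M3)\<close>
   \<and> (\<forall>i J. finite J \<longrightarrow>
        (let V = {s. linf_pos s \<and> (\<forall>k. k \<notin> J \<longrightarrow> s k = 0)} in
          (\<forall>s\<in>V. mu i s \<noteq> \<infinity>) \<and>
          (\<forall>s0\<in>V. \<forall>\<epsilon>>0. \<exists>\<delta>>0. \<forall>s\<in>V. supnorm (s - s0) < \<delta>
              \<longrightarrow> \<bar>enn2real (mu i s) - enn2real (mu i s0)\<bar> < \<epsilon>)))
   \<comment> \<open>(M4)\<close>
   \<and> (\<forall>A R \<epsilon>. A \<subseteq> {s. linf_pos s \<and> supnorm s \<le> R} \<and> \<epsilon> > 0 \<longrightarrow>
        (\<exists>\<delta>>0. \<forall>s0\<in>A. \<forall>s. linf_pos s \<and> supnorm (s - s0) \<le> \<delta> \<longrightarrow>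
           (\<forall>i. \<bar>enn2real (mu i (restr (Ii i) s)) - enn2real (mu i (restr (Ii i) s0))\<bar> \<le> \<epsilon>)))"

definition oplus_MBI :: "(('i \<Rightarrow> real) \<Rightarrow> ('i \<Rightarrow> real)) \<Rightarrow> bool" where
  "oplus_MBI G \<longleftrightarrow> (\<exists>\<phi>. Kinf \<phi> \<and> (\<forall>s b. linf_pos s \<and> linf_pos b \<and> s \<le> omax b (G s)
        \<longrightarrow> supnorm s \<le> \<phi> (supnorm b)))"

definition max_fixed_point :: "(('i \<Rightarrow> real) \<Rightarrow> ('i \<Rightarrow> real)) \<Rightarrow> ('i \<Rightarrow> real) \<Rightarrow> bool" where
  "max_fixed_point T \<sigma> \<longleftrightarrow> linf_pos \<sigma> \<and> T \<sigma> = \<sigma> \<and> (\<forall>s. linf_pos s \<and> T s = s \<longrightarrow> s \<le> \<sigma>)"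

definition semi_attractive_above :: "(('i \<Rightarrow> real) \<Rightarrow> ('i \<Rightarrow> real)) \<Rightarrow> ('i \<Rightarrow> real) \<Rightarrow> bool" where
  "semi_attractive_above T \<sigma> \<longleftrightarrow>
     (\<forall>s. linf_pos s \<and> \<sigma> \<le> s \<longrightarrow> (\<lambda>n. supnorm ((T ^^ n) s - \<sigma>)) \<longlonglongrightarrow> 0)"

definition C0_path_of_decay :: "(('i \<Rightarrow> real) \<Rightarrow> ('i \<Rightarrow> real)) \<Rightarrow> (real \<Rightarrow> ('i \<Rightarrow> real)) \<Rightarrow> bool" where
  "C0_path_of_decay G \<sigma> \<longleftrightarrow>
     (\<forall>r\<ge>0. linf_pos (\<sigma> r) \<and> G (\<sigma> r) \<le> \<sigma> r)
   \<and> (\<exists>\<phi>min \<phi>max. Kinf \<phi>min \<and> Kinf \<phi>max \<and>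
        (\<forall>r\<ge>0. (\<lambda>_. \<phi>min r) \<le> \<sigma> r \<and> \<sigma> r \<le> (\<lambda>_. \<phi>max r)))
   \<and> (\<forall>r1 r2. 0 \<le> r1 \<and> r1 \<le> r2 \<longrightarrow> \<sigma> r1 \<le> \<sigma> r2)
   \<and> (\<forall>r\<ge>0. \<forall>\<epsilon>>0. \<exists>\<delta>>0. \<forall>r'. r' \<ge> 0 \<and> \<bar>r' - r\<bar> < \<delta> \<longrightarrow> supnorm (\<sigma> r' - \<sigma> r) < \<epsilon>)"

end

theory Submission
  imports Defs
begin


lemma supnorm_const: "supnorm (\<lambda>_::'i. c) = \<bar>c\<bar>"
  unfolding supnorm_def by simp

lemma abs_le_supnorm: "bdd_above (range (\<lambda>i. \<bar>x i\<bar>)) \<Longrightarrow> \<bar>x i\<bar> \<le> supnorm x"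
  unfolding supnorm_def by (rule cSUP_upper) auto

lemma supnorm_le: "(\<And>i. \<bar>x i\<bar> \<le> c) \<Longrightarrow> supnorm x \<le> c"
  unfolding supnorm_def by (rule cSUP_least) auto

lemma linf_pos_intro: "(\<And>i. 0 \<le> x i) \<Longrightarrow> (\<And>i. x i \<le> c) \<Longrightarrow> linf_pos x"
  unfolding linf_pos_def by (auto intro!: bdd_aboveI[where M=c])

lemma linf_pos_le: "linf_pos x \<Longrightarrow> x i \<le> supnorm x"
  using abs_le_supnorm[of x i] unfolding linf_pos_def by auto

locale pathctx =
  fixes G :: "('i \<Rightarrow> real) \<Rightarrow> ('i \<Rightarrow> real)" and \<phi> :: "real \<Rightarrow> real"
  assumes mono: "\<And>s t. (\<And>i. 0 \<le> s i) \<Longrightarrow> s \<le> t \<Longrightarrow> G s \<le> G t"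
  and nonneg: "\<And>s i. 0 \<le> G s i"
  and zero: "G (\<lambda>_. 0) = (\<lambda>_. 0)"
  and phi: "Kinf \<phi>"
  and mbi: "\<And>s b. linf_pos s \<Longrightarrow> linf_pos b \<Longrightarrow> s \<le> omax b (G s) \<Longrightarrow> supnorm s \<le> \<phi> (supnorm b)"
  and attr: "\<And>r \<sigma>. r \<ge> 0 \<Longrightarrow> max_fixed_point (\<lambda>s. omax (\<lambda>_. r) (G s)) \<sigma>
              \<Longrightarrow> semi_attractive_above (\<lambda>s. omax (\<lambda>_. r) (G s)) \<sigma>"
begin

definition T where "T r s = omax (\<lambda>_. r) (G s)"
definition S where "S r = {s. linf_pos s \<and> s \<le> T r s}"
definition sig where "sig r = (\<lambda>i. SUP s\<in>S r. s i)"

lemma T_apply: "T r s i = max r (G s i)"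
  by (simp add: T_def omax_def)

lemma T_mono: assumes "\<And>i. 0 \<le> s i" "s \<le> t" "r \<le> r'" shows "T r s \<le> T r' t"
proof -
  have "G s \<le> G t" using mono assms by blast
  then show ?thesis unfolding le_fun_def T_apply using assms(3) by (metis max.mono)
qed

lemma T_ge: "r \<le> T r s i" by (simp add: T_apply)
lemma G_le_T: "G s i \<le> T r s i" by (simp add: T_apply)

lemma const_in_S: "r \<ge> 0 \<Longrightarrow> (\<lambda>_. r) \<in> S r"
  unfolding S_def by (auto intro!: linf_pos_intro simp: le_fun_def T_apply)

lemma S_bound: assumes "r \<ge> 0" "s \<in> S r" shows "s i \<le> \<phi> r"
proof -
  have "linf_pos s" "s \<le> T r s" using assms by (auto simp: S_def)
  moreover have "linf_pos (\<lambda>_::'i. r)" using assms by (auto intro!: linf_pos_intro)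
  ultimately have "supnorm s \<le> \<phi> (supnorm (\<lambda>_::'i. r))"
    by (intro mbi) (auto simp: T_def)
  then show ?thesis using linf_pos_le[OF \<open>linf_pos s\<close>, of i] assms(1) by (simp add: supnorm_const)
qed

lemma S_nonneg: "s \<in> S r \<Longrightarrow> 0 \<le> s i"
  by (auto simp: S_def linf_pos_def)

lemma bdd_S: "r \<ge> 0 \<Longrightarrow> bdd_above ((\<lambda>s. s i) ` S r)"
  using S_bound by (auto intro!: bdd_aboveI[where M="\<phi> r"])

lemma S_ne: "r \<ge> 0 \<Longrightarrow> S r \<noteq> {}"
  using const_in_S by auto

lemma S_le_sig: "r \<ge> 0 \<Longrightarrow> s \<in> S r \<Longrightarrow> s \<le> sig r"
  unfolding le_fun_def sig_def using bdd_S by (auto intro!: cSUP_upper)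

lemma sig_ge: "r \<ge> 0 \<Longrightarrow> r \<le> sig r i"
  using S_le_sig[OF _ const_in_S, of r] by (auto simp: le_fun_def)

lemma sig_le: "r \<ge> 0 \<Longrightarrow> sig r i \<le> \<phi> r"
  unfolding sig_def using S_ne S_bound by (auto intro!: cSUP_least)

lemma sig_linf: "r \<ge> 0 \<Longrightarrow> linf_pos (sig r)"
  using sig_ge sig_le by (intro linf_pos_intro[where c="\<phi> r"]) (auto intro: order_trans[OF _ sig_ge])

lemma sig_nonneg: "r \<ge> 0 \<Longrightarrow> 0 \<le> sig r i"
  using sig_ge[of r i] by linarith

lemma sig_le_T: assumes "r \<ge> 0" shows "sig r \<le> T r (sig r)"
  unfolding le_fun_def
proof
  fix i
  have "(SUP s\<in>S r. s i) \<le> T r (sig r) i"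
  proof (rule cSUP_least)
    show "S r \<noteq> {}" using S_ne assms .
    fix s assume s: "s \<in> S r"
    have "s i \<le> T r s i" using s by (auto simp: S_def le_fun_def)
    also have "T r s \<le> T r (sig r)" using S_le_sig[OF assms s] S_nonneg[OF s] by (intro T_mono) auto
    finally show "s i \<le> T r (sig r) i" by (simp add: le_fun_def)
  qed
  then show "sig r i \<le> T r (sig r) i" by (simp add: sig_def)
qed

lemma sig_fix: assumes "r \<ge> 0" shows "T r (sig r) = sig r"
proof -
  define M where "M = \<phi> r + 1"
  define t where "t = (\<lambda>i. min (T r (sig r) i) M)"
  have sigM: "sig r i < M" for i using sig_le[OF assms, of i] by (simp add: M_def)
  have ge: "sig r \<le> t" using sig_le_T[OF assms] sigM unfolding t_def le_fun_def
    by (auto intro: less_imp_le)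
  have tpos: "0 \<le> t i" for i using ge sig_nonneg[OF assms, of i] by (auto simp: le_fun_def intro: order_trans)
  have "linf_pos t" by (rule linf_pos_intro[where c=M], rule tpos, simp add: t_def)
  moreover have "t \<le> T r t"
  proof -
    have "t \<le> T r (sig r)" by (auto simp: t_def le_fun_def)
    also have "\<dots> \<le> T r t" using ge sig_nonneg[OF assms] by (intro T_mono) auto
    finally show ?thesis .
  qed
  ultimately have "t \<in> S r" by (simp add: S_def)
  then have "t \<le> sig r" using S_le_sig assms by blast
  then have "T r (sig r) \<le> sig r" using sigM unfolding t_def le_fun_def
    by (metis min_less_iff_conj not_le)
  then show ?thesis using sig_le_T[OF assms] by (rule antisym)
qed

lemma sig_max: "r \<ge> 0 \<Longrightarrow> max_fixed_point (\<lambda>s. omax (\<lambda>_. r) (G s)) (sig r)"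
  unfolding max_fixed_point_def
  using sig_linf sig_fix S_le_sig by (auto simp: S_def T_def[abs_def])

lemma sig_mono: assumes "0 \<le> r" "r \<le> r'" shows "sig r \<le> sig r'"
proof -
  have "sig r \<le> T r (sig r)" using sig_le_T assms by auto
  also have "\<dots> \<le> T r' (sig r)" using sig_nonneg assms by (intro T_mono) auto
  finally have "sig r \<in> S r'" using sig_linf assms by (auto simp: S_def)
  then show ?thesis using S_le_sig assms by auto
qed

end


definition interp :: "(nat \<Rightarrow> 'i \<Rightarrow> real) \<Rightarrow> real \<Rightarrow> 'i \<Rightarrow> real" where
  "interp F v = (\<lambda>i. F (nat \<lfloor>v\<rfloor>) i + (v - real (nat \<lfloor>v\<rfloor>)) * (F (Suc (nat \<lfloor>v\<rfloor>)) i - F (nat \<lfloor>v\<rfloor>) i))"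

lemma interp_eq:
  assumes "real n \<le> v" "v \<le> real n + 1"
  shows "interp F v i = F n i + (v - real n) * (F (Suc n) i - F n i)"
proof (cases "v = real n + 1")
  case True
  then have "\<lfloor>v\<rfloor> = int n + 1" by simp
  then have "nat \<lfloor>v\<rfloor> = Suc n" by simp
  then show ?thesis using True by (simp add: interp_def algebra_simps)
next
  case False
  then have "\<lfloor>v\<rfloor> = int n" using assms by (intro floor_unique) auto
  then have "nat \<lfloor>v\<rfloor> = n" by simp
  then show ?thesis by (simp add: interp_def)
qed

lemma interp_nat: "interp F (real n) i = F n i"
  using interp_eq[of n "real n" F i] by simp

lemma floor_bounds_nat:
  assumes "0 \<le> v" shows "real (nat \<lfloor>v\<rfloor>) \<le> v" "v \<le> real (nat \<lfloor>v\<rfloor>) + 1"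
  using assms by (auto simp: of_nat_nat)

locale decfam =
  fixes F :: "nat \<Rightarrow> 'i \<Rightarrow> real" and B :: real
  assumes dec: "\<And>n i. F (Suc n) i \<le> F n i"
  and gap: "\<And>n i. F n i - F (Suc n) i \<le> B"
begin

lemma anti: "n \<le> m \<Longrightarrow> F m i \<le> F n i"
  using lift_Suc_antimono_le[of "\<lambda>n. F n i"] dec by blast

lemma between:
  assumes "0 \<le> v"
  shows "F (Suc (nat \<lfloor>v\<rfloor>)) i \<le> interp F v i" "interp F v i \<le> F (nat \<lfloor>v\<rfloor>) i"
proof -
  let ?n = "nat \<lfloor>v\<rfloor>"
  have e: "interp F v i = F ?n i + (v - real ?n) * (F (Suc ?n) i - F ?n i)"
    by (rule interp_eq) ((use floor_bounds_nat[OF assms] in linarith)+)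
  have t: "0 \<le> v - real ?n" "v - real ?n \<le> 1" using floor_bounds_nat[OF assms] by linarith+
  have d: "F (Suc ?n) i - F ?n i \<le> 0" using dec[of ?n i] by simp
  have "(v - real ?n) * (F (Suc ?n) i - F ?n i) \<ge> 1 * (F (Suc ?n) i - F ?n i)"
    using t d by (intro mult_right_mono_neg) auto
  moreover have "(v - real ?n) * (F (Suc ?n) i - F ?n i) \<le> 0"
    using t d by (simp add: mult_nonneg_nonpos)
  ultimately show "F (Suc ?n) i \<le> interp F v i" "interp F v i \<le> F ?n i" using e by auto
qed

lemma interp_anti:
  assumes "0 \<le> v" "v \<le> v'"
  shows "interp F v' i \<le> interp F v i"
proof -
  let ?n = "nat \<lfloor>v\<rfloor>" and ?m = "nat \<lfloor>v'\<rfloor>"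
  have nm: "?n \<le> ?m" using assms by (simp add: floor_mono nat_mono)
  show ?thesis
  proof (cases "?n = ?m")
    case True
    have e1: "interp F v i = F ?n i + (v - real ?n) * (F (Suc ?n) i - F ?n i)"
      by (rule interp_eq) ((use floor_bounds_nat[OF assms(1)] in linarith)+)
    have e2: "interp F v' i = F ?n i + (v' - real ?n) * (F (Suc ?n) i - F ?n i)"
    proof (rule interp_eq)
      have "0 \<le> v'" using assms by linarith
      from floor_bounds_nat[OF this] True
      show "real ?n \<le> v'" "v' \<le> real ?n + 1" by auto
    qed
    have d: "F (Suc ?n) i - F ?n i \<le> 0" using dec[of ?n i] by simp
    have "(v' - real ?n) * (F (Suc ?n) i - F ?n i) \<le> (v - real ?n) * (F (Suc ?n) i - F ?n i)"
      using d assms by (intro mult_right_mono_neg) auto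
    then show ?thesis using e1 e2 by simp
  next
    case False
    then have "Suc ?n \<le> ?m" using nm by simp
    then have "F ?m i \<le> F (Suc ?n) i" by (rule anti)
    moreover have "interp F v' i \<le> F ?m i" using between(2)[of v' i] assms by simp
    moreover have "F (Suc ?n) i \<le> interp F v i" using between(1)[OF assms(1)] by simp
    ultimately show ?thesis by simp
  qed
qed

lemma interp_lip:
  assumes "0 \<le> v" "v \<le> v'" "v' - v \<le> 1"
  shows "interp F v i - interp F v' i \<le> B * (v' - v)"
proof -
  let ?n = "nat \<lfloor>v\<rfloor>"
  have fb: "real ?n \<le> v" "v \<le> real ?n + 1" using floor_bounds_nat[OF assms(1)] by auto
  have e1: "interp F v i = F ?n i + (v - real ?n) * (F (Suc ?n) i - F ?n i)"
    by (rule interp_eq) ((use fb in linarith)+)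
  show ?thesis
  proof (cases "v' \<le> real ?n + 1")
    case True
    have e2: "interp F v' i = F ?n i + (v' - real ?n) * (F (Suc ?n) i - F ?n i)"
      by (rule interp_eq) ((use fb assms True in linarith)+)
    have "interp F v i - interp F v' i = (v' - v) * (F ?n i - F (Suc ?n) i)"
      using e1 e2 by (simp add: algebra_simps)
    also have "\<dots> \<le> (v' - v) * B" using gap[of ?n i] assms by (intro mult_left_mono) auto
    finally show ?thesis by (simp add: mult.commute)
  next
    case False
    have e2: "interp F v' i = F (Suc ?n) i + (v' - real (Suc ?n)) * (F (Suc (Suc ?n)) i - F (Suc ?n) i)"
      by (rule interp_eq) ((use fb assms False in linarith)+)
    define d1 where "d1 = F ?n i - F (Suc ?n) i"
    define d2 where "d2 = F (Suc ?n) i - F (Suc (Suc ?n)) i"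
    define a where "a = real ?n + 1 - v"
    define b where "b = v' - real ?n - 1"
    have ab: "0 \<le> a" "0 \<le> b" using fb False by (auto simp: a_def b_def)
    have "d1 * a \<le> B * a" using gap[of ?n i] ab by (intro mult_right_mono) (auto simp: d1_def)
    moreover have "d2 * b \<le> B * b" using gap[of "Suc ?n" i] ab by (intro mult_right_mono) (auto simp: d2_def)
    moreover have "interp F v i - interp F v' i = d1 * a + d2 * b"
      using e1 e2 by (simp add: d1_def d2_def a_def b_def algebra_simps)
    moreover have "B * (v' - v) = B * a + B * b" by (simp add: a_def b_def algebra_simps)
    ultimately show ?thesis by linarith
  qed
qed

end



definition Rk :: "int \<Rightarrow> real" where "Rk k = 2 powr (real_of_int k)"
definition pc :: "real \<Rightarrow> int" where "pc r = \<lceil>log 2 r\<rceil> - 1"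
definition nu :: "int \<Rightarrow> real \<Rightarrow> real" where "nu k r = Rk k / (r - Rk k) - 1"
definition wv :: "int \<Rightarrow> real \<Rightarrow> real" where "wv k v = Rk k + Rk k / (1 + v)"

lemma Rk_pos: "0 < Rk k" by (simp add: Rk_def)
lemma Rk_Suc: "Rk (k + 1) = 2 * Rk k"
  by (simp add: Rk_def powr_add)
lemma Rk_mono: "k \<le> k' \<Longrightarrow> Rk k \<le> Rk k'"
  by (simp add: Rk_def)
lemma Rk_log: "log 2 (Rk k) = real_of_int k"
  by (simp add: Rk_def)

lemma pc_bounds: assumes "0 < r" shows "Rk (pc r) < r" "r \<le> Rk (pc r + 1)"
proof -
  have a: "real_of_int (pc r) < log 2 r" unfolding pc_def by linarith
  have b: "log 2 r \<le> real_of_int (pc r + 1)" unfolding pc_def by simp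
  show "Rk (pc r) < r"
    using a assms by (metis Rk_log Rk_pos log_less_cancel_iff one_less_numeral_iff semiring_norm(76))
  show "r \<le> Rk (pc r + 1)"
    using b assms by (metis Rk_log Rk_pos log_le_cancel_iff one_less_numeral_iff semiring_norm(76))
qed

lemma pc_unique: assumes "Rk k < r" "r \<le> Rk (k + 1)" shows "pc r = k"
proof -
  have r: "0 < r" using assms Rk_pos[of k] by linarith
  have "real_of_int k < log 2 r"
    using assms(1) r by (metis Rk_log Rk_pos log_less_cancel_iff one_less_numeral_iff semiring_norm(76))
  moreover have "log 2 r \<le> real_of_int (k + 1)"
    using assms(2) r by (metis Rk_log Rk_pos log_le_cancel_iff one_less_numeral_iff semiring_norm(76))
  ultimately have "\<lceil>log 2 r\<rceil> = k + 1" by (intro ceiling_unique) auto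
  then show ?thesis by (simp add: pc_def)
qed

lemma pc_mono: "0 < r \<Longrightarrow> r \<le> r' \<Longrightarrow> pc r \<le> pc r'"
  unfolding pc_def by (intro diff_right_mono ceiling_mono) simp

lemma wv_range: assumes "0 \<le> v" shows "Rk k < wv k v" "wv k v \<le> Rk (k + 1)"
proof -
  have p: "0 < Rk k" by (rule Rk_pos)
  have "0 < Rk k / (1 + v)" using p assms by simp
  then show "Rk k < wv k v" by (simp add: wv_def)
  have "Rk k / (1 + v) \<le> Rk k" using p assms by (simp add: divide_le_eq)
  then show "wv k v \<le> Rk (k + 1)" by (simp add: wv_def Rk_Suc)
qed

lemma nu_wv: assumes "0 \<le> v" shows "nu k (wv k v) = v"
  using Rk_pos[of k] assms by (simp add: nu_def wv_def)

lemma wv_nu: assumes "Rk k < r" shows "wv k (nu k r) = r"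
  using assms Rk_pos[of k] by (simp add: nu_def wv_def)

lemma nu_nonneg: assumes "Rk k < r" "r \<le> Rk (k + 1)" shows "0 \<le> nu k r"
  using assms by (simp add: nu_def Rk_Suc le_divide_eq)

lemma nu_anti: assumes "Rk k < r" "r \<le> r'" shows "nu k r' \<le> nu k r"
  using assms Rk_pos[of k] unfolding nu_def by (simp add: frac_le)

lemma wv_anti: assumes "0 \<le> v" "v < v'" shows "wv k v' < wv k v"
  using assms Rk_pos[of k] unfolding wv_def by (simp add: frac_less2)

lemma wv_zero: "wv k 0 = Rk (k + 1)"
  by (simp add: wv_def Rk_Suc)



context pathctx
begin

definition Fk where "Fk k n = (T (Rk k) ^^ n) (sig (Rk (k + 1)))"

lemma Rk_ge0: "0 \<le> Rk k" using Rk_pos[of k] by simp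

lemma Fk_0: "Fk k 0 = sig (Rk (k + 1))" by (simp add: Fk_def)
lemma Fk_Suc: "Fk k (Suc n) = T (Rk k) (Fk k n)" by (simp add: Fk_def)

lemma Fk_lower: "sig (Rk k) \<le> Fk k n"
proof (induction n)
  case 0
  show ?case using sig_mono[of "Rk k" "Rk (k+1)"] Rk_ge0 Rk_mono[of k "k+1"] by (simp add: Fk_0)
next
  case (Suc n)
  have "sig (Rk k) = T (Rk k) (sig (Rk k))" using sig_fix Rk_ge0 by simp
  also have "\<dots> \<le> T (Rk k) (Fk k n)" using Suc sig_nonneg Rk_ge0 by (intro T_mono) auto
  finally show ?case by (simp add: Fk_Suc)
qed

lemma Fk_nonneg: "0 \<le> Fk k n i"
  using Fk_lower[of k n] sig_nonneg[OF Rk_ge0, of k i] by (auto simp: le_fun_def intro: order_trans)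

lemma Fk_dec: "Fk k (Suc n) \<le> Fk k n"
proof (induction n)
  case 0
  have "T (Rk k) (sig (Rk (k+1))) \<le> T (Rk (k+1)) (sig (Rk (k+1)))"
    using sig_nonneg Rk_ge0 Rk_mono[of k "k+1"] by (intro T_mono) auto
  then show ?case using sig_fix Rk_ge0 by (simp add: Fk_Suc Fk_0)
next
  case (Suc n)
  show ?case using Suc Fk_nonneg[of k "Suc n"] unfolding Fk_Suc by (intro T_mono) auto
qed

lemma Fk_upper: "Fk k n i \<le> sig (Rk (k + 1)) i"
proof -
  have "Fk k n i \<le> Fk k 0 i"
    using lift_Suc_antimono_le[of "\<lambda>n. Fk k n i" 0 n] Fk_dec by (auto simp: le_fun_def)
  then show ?thesis by (simp add: Fk_0)
qed

definition Bk where "Bk k = \<phi> (Rk (k + 1)) + 1"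

lemma Bk_pos: "0 < Bk k"
  using sig_le[OF Rk_ge0, of "k+1"] sig_nonneg[OF Rk_ge0, of "k+1"] unfolding Bk_def
  by (meson add_nonneg_pos order_trans zero_less_one)

lemma Fk_le_phi: "Fk k n i \<le> \<phi> (Rk (k + 1))"
  using Fk_upper[of k n i] sig_le[OF Rk_ge0, of "k+1" i] by linarith

lemma decfam_Fk: "decfam (\<lambda>n. Fk k n) (Bk k)"
proof
  fix n i
  show "Fk k (Suc n) i \<le> Fk k n i" using Fk_dec[of k n] by (simp add: le_fun_def)
  show "Fk k n i - Fk k (Suc n) i \<le> Bk k"
    using Fk_le_phi[of k n i] Fk_nonneg[of k "Suc n" i] by (simp add: Bk_def)
qed

definition P where "P k v = interp (Fk k) v"

lemma P_between: assumes "0 \<le> v" shows "sig (Rk k) i \<le> P k v i" "P k v i \<le> sig (Rk (k + 1)) i"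
proof -
  interpret decfam "\<lambda>n. Fk k n" "Bk k" by (rule decfam_Fk)
  show "sig (Rk k) i \<le> P k v i"
    using between(1)[OF assms, of i] Fk_lower[of k "Suc (nat \<lfloor>v\<rfloor>)"] unfolding P_def
    by (auto simp: le_fun_def intro: order_trans)
  show "P k v i \<le> sig (Rk (k + 1)) i"
    using between(2)[OF assms, of i] Fk_upper[of k "nat \<lfloor>v\<rfloor>" i] unfolding P_def by linarith
qed

lemma P_nonneg: "0 \<le> v \<Longrightarrow> 0 \<le> P k v i"
  using P_between(1)[of v k i] sig_nonneg[OF Rk_ge0, of k i] by linarith

lemma P_decay: assumes "0 \<le> v" shows "G (P k v) \<le> P k v"
proof -
  interpret decfam "\<lambda>n. Fk k n" "Bk k" by (rule decfam_Fk)
  let ?n = "nat \<lfloor>v\<rfloor>"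
  have "P k v \<le> Fk k ?n" using between(2)[OF assms] by (simp add: P_def le_fun_def)
  then have "G (P k v) \<le> G (Fk k ?n)" using P_nonneg[OF assms] by (intro mono) auto
  also have "\<dots> \<le> Fk k (Suc ?n)" using G_le_T by (simp add: Fk_Suc le_fun_def)
  also have "\<dots> \<le> P k v" using between(1)[OF assms] by (simp add: P_def le_fun_def)
  finally show ?thesis .
qed

lemma P_anti: "0 \<le> v \<Longrightarrow> v \<le> v' \<Longrightarrow> P k v' i \<le> P k v i"
proof -
  interpret decfam "\<lambda>n. Fk k n" "Bk k" by (rule decfam_Fk)
  show "0 \<le> v \<Longrightarrow> v \<le> v' \<Longrightarrow> P k v' i \<le> P k v i" unfolding P_def by (rule interp_anti)
qed

lemma P_lip: "0 \<le> v \<Longrightarrow> v \<le> v' \<Longrightarrow> v' - v \<le> 1 \<Longrightarrow> P k v i - P k v' i \<le> Bk k * (v' - v)"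
proof -
  interpret decfam "\<lambda>n. Fk k n" "Bk k" by (rule decfam_Fk)
  show "0 \<le> v \<Longrightarrow> v \<le> v' \<Longrightarrow> v' - v \<le> 1 \<Longrightarrow> P k v i - P k v' i \<le> Bk k * (v' - v)"
    unfolding P_def by (rule interp_lip)
qed

lemma P_nat: "P k (real n) = Fk k n"
  by (simp add: P_def interp_nat fun_eq_iff)

definition path where
  "path r = (if r \<le> 0 then (\<lambda>_. 0) else P (pc r) (nu (pc r) r))"

lemma path_pos: assumes "0 < r"
  shows "path r = P (pc r) (nu (pc r) r)" "0 \<le> nu (pc r) r"
  using assms pc_bounds[OF assms] by (auto simp: path_def intro!: nu_nonneg)

lemma path_wv: assumes "0 \<le> v" shows "path (wv k v) = P k v"
proof -
  have "pc (wv k v) = k" using wv_range[OF assms] by (intro pc_unique) auto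
  moreover have "0 < wv k v" using wv_range[OF assms, of k] Rk_pos[of k] by linarith
  ultimately show ?thesis using nu_wv[OF assms] by (simp add: path_def)
qed

end


lemma eta_bound: assumes "0 < (B::real)" "0 < \<epsilon>" shows "B * min 1 (\<epsilon> / B) \<le> \<epsilon>"
proof -
  have "B * min 1 (\<epsilon> / B) \<le> B * (\<epsilon> / B)" using assms mult_left_mono[OF min.cobounded2[of 1 "\<epsilon>/B"], of B] by simp
  then show ?thesis using assms by simp
qed

context pathctx
begin

lemma phi_mono: "0 \<le> x \<Longrightarrow> x \<le> y \<Longrightarrow> \<phi> x \<le> \<phi> y"
  using phi unfolding Kinf_def by (intro strict_mono_on_leD[of "{0..}" \<phi>]) auto

lemma phi0: "\<phi> 0 = 0" using phi by (simp add: Kinf_def)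

lemma path_zero: "r \<le> 0 \<Longrightarrow> path r = (\<lambda>_. 0)" by (simp add: path_def)

lemma path_bounds: assumes "0 \<le> r" shows "r / 2 \<le> path r i" "path r i \<le> \<phi> (2 * r)"
proof -
  have "r / 2 \<le> path r i \<and> path r i \<le> \<phi> (2 * r)"
  proof (cases "r = 0")
    case True then show ?thesis by (simp add: path_zero phi0)
  next
    case False
    then have r: "0 < r" using assms by simp
    let ?k = "pc r"
    note pb = pc_bounds[OF r]
    note pp = path_pos[OF r]
    have "r / 2 \<le> Rk ?k" using pb(2) Rk_Suc[of ?k] by simp
    also have "\<dots> \<le> sig (Rk ?k) i" using sig_ge Rk_ge0 by blast
    also have "\<dots> \<le> path r i" using P_between(1)[OF pp(2)] pp(1) by simp
    finally have l: "r / 2 \<le> path r i" .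
    have "path r i \<le> sig (Rk (?k + 1)) i" using P_between(2)[OF pp(2)] pp(1) by simp
    also have "\<dots> \<le> \<phi> (Rk (?k + 1))" using sig_le Rk_ge0 by blast
    also have "\<dots> \<le> \<phi> (2 * r)" using pb(1) Rk_Suc[of ?k] Rk_ge0[of "?k+1"] by (intro phi_mono) auto
    finally show ?thesis using l by simp
  qed
  then show "r / 2 \<le> path r i" "path r i \<le> \<phi> (2 * r)" by auto
qed

lemma path_nonneg: "0 \<le> r \<Longrightarrow> 0 \<le> path r i"
  using path_bounds(1)[of r i] by linarith

lemma path_linf: "0 \<le> r \<Longrightarrow> linf_pos (path r)"
  using path_bounds path_nonneg by (intro linf_pos_intro) auto

lemma path_decay: assumes "0 \<le> r" shows "G (path r) \<le> path r"
proof (cases "r = 0")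
  case True then show ?thesis by (simp add: path_zero zero)
next
  case False
  then have r: "0 < r" using assms by simp
  show ?thesis using path_pos[OF r] P_decay by simp
qed

lemma path_mono: assumes "0 \<le> r1" "r1 \<le> r2" shows "path r1 \<le> path r2"
proof (cases "r1 = 0")
  case True then show ?thesis using path_nonneg assms by (auto simp: path_zero le_fun_def)
next
  case False
  then have r1: "0 < r1" using assms by simp
  then have r2: "0 < r2" using assms by simp
  have kk: "pc r1 \<le> pc r2" using pc_mono r1 assms by blast
  show ?thesis
  proof (cases "pc r1 = pc r2")
    case True
    let ?k = "pc r1"
    have "nu ?k r2 \<le> nu ?k r1" using pc_bounds(1)[OF r1] assms by (intro nu_anti) auto
    moreover have "0 \<le> nu ?k r2" using path_pos(2)[OF r2] True by simp
    ultimately have "\<forall>i. P ?k (nu ?k r1) i \<le> P ?k (nu ?k r2) i"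
      using P_anti by blast
    moreover have "path r2 = P ?k (nu ?k r2)" using path_pos(1)[OF r2] True by simp
    moreover have "path r1 = P ?k (nu ?k r1)" using path_pos(1)[OF r1] by simp
    ultimately show ?thesis by (simp add: le_fun_def)
  next
    case False
    then have k1: "pc r1 + 1 \<le> pc r2" using kk by simp
    show ?thesis unfolding le_fun_def
    proof
      fix i
      have "path r1 i \<le> sig (Rk (pc r1 + 1)) i" using P_between(2) path_pos[OF r1] by simp
      also have "\<dots> \<le> sig (Rk (pc r2)) i" using sig_mono[OF Rk_ge0 Rk_mono[OF k1]] by (simp add: le_fun_def)
      also have "\<dots> \<le> path r2 i" using P_between(1) path_pos[OF r2] by simp
      finally show "path r1 i \<le> path r2 i" .
    qed
  qed
qed

lemma T_eq: "T r = (\<lambda>s. omax (\<lambda>_. r) (G s))"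
  by (simp add: fun_eq_iff T_def)

lemma attract: "\<exists>N. \<forall>i. Fk m N i \<le> sig (Rk m) i + \<epsilon>" if "0 < \<epsilon>"
proof -
  have sa: "semi_attractive_above (T (Rk m)) (sig (Rk m))"
    using attr[OF Rk_ge0 sig_max[OF Rk_ge0]] by (simp add: T_eq)
  have "linf_pos (sig (Rk (m + 1)))" by (rule sig_linf[OF Rk_ge0])
  moreover have "sig (Rk m) \<le> sig (Rk (m + 1))" using sig_mono[OF Rk_ge0 Rk_mono[of m "m+1"]] by simp
  ultimately have "(\<lambda>n. supnorm (Fk m n - sig (Rk m))) \<longlonglongrightarrow> 0"
    using sa unfolding semi_attractive_above_def Fk_def by simp
  from LIMSEQ_D[OF this that] obtain N where N: "\<And>n. n \<ge> N \<Longrightarrow> norm (supnorm (Fk m n - sig (Rk m)) - 0) < \<epsilon>"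
    by blast
  have bd: "bdd_above (range (\<lambda>i. \<bar>(Fk m N - sig (Rk m)) i\<bar>))"
  proof (rule bdd_aboveI[where M="\<phi> (Rk (m+1))"])
    fix x assume "x \<in> range (\<lambda>i. \<bar>(Fk m N - sig (Rk m)) i\<bar>)"
    then obtain i where x: "x = \<bar>Fk m N i - sig (Rk m) i\<bar>" by auto
    have "sig (Rk m) i \<le> Fk m N i" using Fk_lower[of m N] by (simp add: le_fun_def)
    then show "x \<le> \<phi> (Rk (m+1))" using x Fk_le_phi[of m N i] sig_nonneg[OF Rk_ge0, of m i] by simp
  qed
  have "\<forall>i. Fk m N i \<le> sig (Rk m) i + \<epsilon>"
  proof
    fix i
    have "\<bar>(Fk m N - sig (Rk m)) i\<bar> \<le> supnorm (Fk m N - sig (Rk m))" by (rule abs_le_supnorm[OF bd])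
    moreover have "supnorm (Fk m N - sig (Rk m)) < \<epsilon>" using N[of N] by simp
    ultimately show "Fk m N i \<le> sig (Rk m) i + \<epsilon>" by simp
  qed
  then show ?thesis by blast
qed

lemma path_right: assumes "0 \<le> r" "0 < \<epsilon>" shows "\<exists>b>r. \<forall>i. path b i \<le> path r i + \<epsilon>"
proof (cases "r = 0")
  case True
  have "continuous_on {0..} \<phi>" using phi by (simp add: Kinf_def)
  then have "\<forall>e>0. \<exists>d>0. \<forall>x'\<in>{0..}. dist x' 0 < d \<longrightarrow> dist (\<phi> x') (\<phi> 0) < e"
    unfolding continuous_on_iff by (rule bspec) simp
  then have "\<exists>d>0. \<forall>x'\<in>{0..}. dist x' 0 < d \<longrightarrow> dist (\<phi> x') (\<phi> 0) < \<epsilon>"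
    using assms(2) by blast
  then obtain d where d: "d > 0" "\<forall>x'\<in>{0..}. dist x' 0 < d \<longrightarrow> dist (\<phi> x') (\<phi> 0) < \<epsilon>"
    by blast
  have "\<phi> (2 * (d / 4)) < \<epsilon>"
  proof -
    have "\<bar>\<phi> (d/2)\<bar> < \<epsilon>" using d(2) d(1) by (simp add: phi0 dist_real_def)
    then show ?thesis by simp
  qed
  then have "\<forall>i. path (d / 4) i \<le> path r i + \<epsilon>"
    using path_bounds(2)[of "d/4"] d(1) True by (auto simp: path_zero intro: order_trans less_imp_le)
  then show ?thesis using d(1) True by (intro exI[of _ "d/4"]) auto
next
  case False
  then have r: "0 < r" using assms by simp
  define k where "k = pc r"
  define v0 where "v0 = nu k r"
  have v0: "0 \<le> v0" using path_pos[OF r] by (simp add: v0_def k_def)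
  have rw: "r = wv k v0" using wv_nu[OF pc_bounds(1)[OF r, folded k_def]] by (simp add: v0_def)
  show ?thesis
  proof (cases "v0 = 0")
    case False
    define \<eta> where "\<eta> = min 1 (\<epsilon> / Bk k)"
    define v' where "v' = max 0 (v0 - \<eta>)"
    have eta: "0 < \<eta>" "\<eta> \<le> 1" "Bk k * \<eta> \<le> \<epsilon>" using Bk_pos assms(2) eta_bound[of "Bk k" \<epsilon>]
      by (auto simp: \<eta>_def)
    have v': "0 \<le> v'" "v' < v0" "v' \<le> v0" "v0 - v' \<le> \<eta>" using v0 False eta by (auto simp: v'_def)
    have "r < wv k v'" using wv_anti[OF v'(1) v'(2)] rw by simp
    moreover have "\<forall>i. path (wv k v') i \<le> path r i + \<epsilon>"
    proof
      fix i
      have "P k v' i - P k v0 i \<le> Bk k * (v0 - v')" using P_lip[of v' v0] v' eta by auto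
      also have "\<dots> \<le> Bk k * \<eta>" using v' Bk_pos[of k] by (intro mult_left_mono) auto
      finally show "path (wv k v') i \<le> path r i + \<epsilon>"
        using path_wv[OF v'(1)] path_wv[OF v0] rw eta by simp
    qed
    ultimately show ?thesis by blast
  next
    case True
    let ?m = "k + 1"
    have rR: "r = Rk ?m" using rw True wv_zero by simp
    obtain N where N: "\<forall>i. Fk ?m N i \<le> sig (Rk ?m) i + \<epsilon>" using attract assms(2) by blast
    have "r < wv ?m (real N)" using wv_range(1)[of "real N" ?m] rR by simp
    moreover have "path r = sig (Rk ?m)"
      using path_wv[OF v0] rw True P_nat[of k 0] Fk_0 by simp
    moreover have "path (wv ?m (real N)) = Fk ?m N" using path_wv[of "real N"] P_nat by simp
    ultimately show ?thesis using N by (intro exI[of _ "wv ?m (real N)"]) simp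
  qed
qed

lemma path_left: assumes "0 < r" "0 < \<epsilon>" shows "\<exists>a. 0 \<le> a \<and> a < r \<and> (\<forall>i. path r i - \<epsilon> \<le> path a i)"
proof -
  define k where "k = pc r"
  define v0 where "v0 = nu k r"
  have v0: "0 \<le> v0" using path_pos[OF assms(1)] by (simp add: v0_def k_def)
  have rw: "r = wv k v0" using wv_nu[OF pc_bounds(1)[OF assms(1), folded k_def]] by (simp add: v0_def)
  define \<eta> where "\<eta> = min 1 (\<epsilon> / Bk k)"
  have eta: "0 < \<eta>" "\<eta> \<le> 1" "Bk k * \<eta> \<le> \<epsilon>" using Bk_pos assms(2) eta_bound[of "Bk k" \<epsilon>]
    by (auto simp: \<eta>_def)
  define v' where "v' = v0 + \<eta>"
  have v': "0 \<le> v'" "v0 < v'" using v0 eta by (auto simp: v'_def)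
  have "wv k v' < r" using wv_anti[OF v0 v'(2)] rw by simp
  moreover have "0 \<le> wv k v'" using wv_range(1)[OF v'(1), of k] Rk_pos[of k] by linarith
  moreover have "\<forall>i. path r i - \<epsilon> \<le> path (wv k v') i"
  proof
    fix i
    have "P k v0 i - P k v' i \<le> Bk k * (v' - v0)" using P_lip[of v0 v'] v0 v' eta by (auto simp: v'_def)
    then show "path r i - \<epsilon> \<le> path (wv k v') i"
      using path_wv[OF v'(1)] path_wv[OF v0] rw eta by (simp add: v'_def)
  qed
  ultimately show ?thesis by blast
qed

end


lemma Kinf_half: "Kinf (\<lambda>r::real. r / 2)"
  unfolding Kinf_def
proof (intro conjI allI)
  show "continuous_on {0..} (\<lambda>r::real. r / 2)" by (intro continuous_intros) auto
  show "strict_mono_on {0..} (\<lambda>r::real. r / 2)" by (auto simp: strict_mono_on_def)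
  show "(0::real) / 2 = 0" by simp
  fix M :: real
  show "\<exists>x\<ge>0. M < x / 2" by (intro exI[of _ "2 * \<bar>M\<bar> + 2"]) auto
qed

lemma Kinf_scale: assumes "Kinf \<phi>" shows "Kinf (\<lambda>r. \<phi> (2 * r))"
  unfolding Kinf_def
proof (intro conjI allI)
  have c: "continuous_on {0..} \<phi>" and s: "strict_mono_on {0..} \<phi>" and z: "\<phi> 0 = 0"
    and u: "\<forall>M. \<exists>x\<ge>0. \<phi> x > M" using assms by (auto simp: Kinf_def)
  show "continuous_on {0..} (\<lambda>r. \<phi> (2 * r))"
    by (rule continuous_on_compose2[OF c]) (auto intro!: continuous_intros)
  show "strict_mono_on {0..} (\<lambda>r. \<phi> (2 * r))"
    using s by (auto simp: strict_mono_on_def)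
  show "\<phi> (2 * 0) = 0" using z by simp
  fix M
  obtain x where "x \<ge> 0" "\<phi> x > M" using u by blast
  then show "\<exists>x\<ge>0. M < \<phi> (2 * x)" by (intro exI[of _ "x/2"]) auto
qed

context pathctx
begin

lemma path_cont: "\<forall>r\<ge>0. \<forall>\<epsilon>>0. \<exists>\<delta>>0. \<forall>r'. r' \<ge> 0 \<and> \<bar>r' - r\<bar> < \<delta> \<longrightarrow> supnorm (path r' - path r) < \<epsilon>"
proof (intro allI impI)
  fix r \<epsilon> :: real assume r: "0 \<le> r" and e: "0 < \<epsilon>"
  obtain b where b: "b > r" "\<forall>i. path b i \<le> path r i + \<epsilon>/2" using path_right[OF r, of "\<epsilon>/2"] e by auto
  have up: "\<bar>path r' i - path r i\<bar> \<le> \<epsilon>/2" if "r \<le> r'" "r' \<le> b" for r' i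
  proof -
    have "path r i \<le> path r' i" using path_mono[OF r that(1)] by (simp add: le_fun_def)
    moreover have "path r' i \<le> path b i" using path_mono[of r' b] that r by (simp add: le_fun_def)
    moreover have "path b i \<le> path r i + \<epsilon>/2" using b(2) by blast
    ultimately show ?thesis by linarith
  qed
  obtain a where a: "0 \<le> a" "a \<le> r" "r = 0 \<or> a < r" "\<forall>i. path r i - \<epsilon>/2 \<le> path a i"
  proof (cases "r = 0")
    case True then show ?thesis using that[of 0] e by simp
  next
    case False
    then have "0 < r" using r by simp
    from path_left[OF this, of "\<epsilon>/2"] e obtain a where "0 \<le> a" "a < r" "\<forall>i. path r i - \<epsilon>/2 \<le> path a i" by auto
    then show ?thesis using that[of a] by simp
  qed
  have lo: "\<bar>path r' i - path r i\<bar> \<le> \<epsilon>/2" if "a \<le> r'" "r' \<le> r" for r' i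
  proof -
    have "path a i \<le> path r' i" using path_mono[OF a(1) that(1)] by (simp add: le_fun_def)
    moreover have "path r' i \<le> path r i" using path_mono[of r' r] that a by (simp add: le_fun_def)
    moreover have "path r i - \<epsilon>/2 \<le> path a i" using a(4) by blast
    ultimately show ?thesis by linarith
  qed
  define \<delta> where "\<delta> = (if r = 0 then b - r else min (b - r) (r - a))"
  have d: "0 < \<delta>" using a b by (auto simp: \<delta>_def)
  have "supnorm (path r' - path r) < \<epsilon>" if "r' \<ge> 0" "\<bar>r' - r\<bar> < \<delta>" for r'
  proof -
    have "\<bar>path r' i - path r i\<bar> \<le> \<epsilon>/2" for i
    proof (cases "r \<le> r'")
      case True
      then show ?thesis using up[of r' i] that by (auto simp: \<delta>_def split: if_splits)
    next
      case False
      then have "r \<noteq> 0" using that r by auto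
      then show ?thesis using lo[of r' i] that False by (auto simp: \<delta>_def)
    qed
    then have "supnorm (path r' - path r) \<le> \<epsilon>/2" by (intro supnorm_le) simp
    then show ?thesis using e by simp
  qed
  then show "\<exists>\<delta>>0. \<forall>r'. r' \<ge> 0 \<and> \<bar>r' - r\<bar> < \<delta> \<longrightarrow> supnorm (path r' - path r) < \<epsilon>"
    using d by blast
qed

lemma path_exists: "\<exists>\<sigma>. C0_path_of_decay G \<sigma>"
proof (intro exI[of _ path])
  show "C0_path_of_decay G path"
    unfolding C0_path_of_decay_def
  proof (intro conjI)
    show "\<forall>r\<ge>0. linf_pos (path r) \<and> G (path r) \<le> path r" using path_linf path_decay by blast
    show "\<exists>\<phi>min \<phi>max. Kinf \<phi>min \<and> Kinf \<phi>max \<and> (\<forall>r\<ge>0. (\<lambda>_. \<phi>min r) \<le> path r \<and> path r \<le> (\<lambda>_. \<phi>max r))"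
      using Kinf_half Kinf_scale[OF phi] path_bounds by (intro exI[of _ "\<lambda>r. r/2"] exI[of _ "\<lambda>r. \<phi> (2 * r)"]) (auto simp: le_fun_def)
    show "\<forall>r1 r2. 0 \<le> r1 \<and> r1 \<le> r2 \<longrightarrow> path r1 \<le> path r2" using path_mono by blast
    show "\<forall>r\<ge>0. \<forall>\<epsilon>>0. \<exists>\<delta>>0. \<forall>r'. r' \<ge> 0 \<and> \<bar>r' - r\<bar> < \<delta> \<longrightarrow> supnorm (path r' - path r) < \<epsilon>"
      by (rule path_cont)
  qed
qed

end


lemma Kinf_nonneg: "Kinf g \<Longrightarrow> 0 \<le> x \<Longrightarrow> 0 \<le> g x"
  unfolding Kinf_def using strict_mono_on_leD[of "{0..}" g 0 x] by auto

lemma Kinf_mono: "Kinf g \<Longrightarrow> 0 \<le> x \<Longrightarrow> x \<le> y \<Longrightarrow> g x \<le> g y"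
  unfolding Kinf_def using strict_mono_on_leD[of "{0..}" g x y] by auto

theorem theorem3p24:
  fixes Ii :: "'i::countable \<Rightarrow> 'i set"
    and gam :: "'i \<Rightarrow> 'i \<Rightarrow> real \<Rightarrow> real"
    and mu :: "'i \<Rightarrow> ('i \<Rightarrow> real) \<Rightarrow> ennreal"
  assumes "gain_operator Ii gam mu"
    and "oplus_MBI (Gam Ii gam mu)"
    and "\<forall>r\<ge>0. \<forall>\<sigma>. max_fixed_point (\<lambda>s. omax (\<lambda>_. r) (Gam Ii gam mu s)) \<sigma>
            \<longrightarrow> semi_attractive_above (\<lambda>s. omax (\<lambda>_. r) (Gam Ii gam mu s)) \<sigma>"
  shows "\<exists>\<sigma>. C0_path_of_decay (Gam Ii gam mu) \<sigma>"
proof -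
  note GO = assms(1)[unfolded gain_operator_def]
  note c1 = conjunct1[OF GO]
  note c2 = conjunct1[OF conjunct2[OF GO]]
  note c4 = conjunct1[OF conjunct2[OF conjunct2[OF conjunct2[OF GO]]]]
  note c5 = conjunct1[OF conjunct2[OF conjunct2[OF conjunct2[OF conjunct2[OF GO]]]]]
  note c6 = conjunct1[OF conjunct2[OF conjunct2[OF conjunct2[OF conjunct2[OF conjunct2[OF GO]]]]]]
  have K: "\<And>i j. j \<in> Ii i \<Longrightarrow> Kinf (gam i j)" using c2 by blast
  have fin: "\<And>i. finite (Ii i)" using c1 by blast
  have M1: "\<And>i. mu i (\<lambda>_. 0) = 0" using c4 by blast
  have M2: "\<And>i s t. linf_pos s \<Longrightarrow> linf_pos t \<Longrightarrow> s \<le> t \<Longrightarrow> mu i s \<le> mu i t"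
    using c5 by blast
  have M3: "mu i s \<noteq> \<infinity>" if "linf_pos s" "\<forall>k. k \<notin> Ii i \<longrightarrow> s k = 0" for i s
  proof -
    have "(\<forall>s\<in>{s. linf_pos s \<and> (\<forall>k. k \<notin> Ii i \<longrightarrow> s k = 0)}. mu i s \<noteq> \<infinity>)"
      using c6[rule_format, OF fin[of i], of i] unfolding Let_def by (rule conjunct1)
    then show ?thesis using that by blast
  qed
  let ?G = "Gam Ii gam mu"
  have gv_nonneg: "0 \<le> gvec Ii gam i s j" if "\<And>j. 0 \<le> s j" for s i j
    using K Kinf_nonneg that by (auto simp: gvec_def)
  have gv_linf: "linf_pos (gvec Ii gam i s)" if "\<And>j. 0 \<le> s j" for s i
  proof (rule linf_pos_intro[where c="\<Sum>j\<in>Ii i. gam i j (s j)"])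
    show "0 \<le> gvec Ii gam i s j" for j by (rule gv_nonneg[OF that])
    fix j
    show "gvec Ii gam i s j \<le> (\<Sum>j\<in>Ii i. gam i j (s j))"
    proof (cases "j \<in> Ii i")
      case True
      then show ?thesis using fin[of i] K Kinf_nonneg that
        by (auto simp: gvec_def intro!: member_le_sum)
    next
      case False
      then show ?thesis using K Kinf_nonneg that by (auto simp: gvec_def intro!: sum_nonneg)
    qed
  qed
  have gv_fin: "mu i (gvec Ii gam i s) \<noteq> \<infinity>" if "\<And>j. 0 \<le> s j" for s i
    using M3[OF gv_linf[OF that, of i]] by (auto simp: gvec_def)
  have mono: "?G s \<le> ?G t" if s: "\<And>i. 0 \<le> s i" and st: "s \<le> t" for s t
  proof -
    have t: "0 \<le> t i" for i using s[of i] st by (auto simp: le_fun_def intro: order_trans)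
    show ?thesis unfolding le_fun_def Gam_def
    proof
      fix i
      have "gvec Ii gam i s \<le> gvec Ii gam i t"
        using K Kinf_mono s st by (auto simp: gvec_def le_fun_def)
      then have "mu i (gvec Ii gam i s) \<le> mu i (gvec Ii gam i t)"
        using M2 gv_linf s t by blast
      then show "enn2real (mu i (gvec Ii gam i s)) \<le> enn2real (mu i (gvec Ii gam i t))"
        using gv_fin[OF t] by (intro enn2real_mono) (auto simp: less_top)
    qed
  qed
  have zero: "?G (\<lambda>_. 0) = (\<lambda>_. 0)"
  proof -
    have "gvec Ii gam i (\<lambda>_. 0) = (\<lambda>_. 0)" for i
      using K by (auto simp: gvec_def Kinf_def fun_eq_iff)
    then show ?thesis by (simp add: Gam_def M1)
  qed
  obtain \<phi> where phi: "Kinf \<phi>" and mbi: "\<And>s b. linf_pos s \<Longrightarrow> linf_pos b \<Longrightarrow> s \<le> omax b (?G s) \<Longrightarrow> supnorm s \<le> \<phi> (supnorm b)"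
    using assms(2) unfolding oplus_MBI_def by blast
  interpret pathctx ?G \<phi>
  proof
    show "\<And>s t. (\<And>i. 0 \<le> s i) \<Longrightarrow> s \<le> t \<Longrightarrow> ?G s \<le> ?G t" by (rule mono)
    show "\<And>s i. 0 \<le> ?G s i" by (simp add: Gam_def)
    show "?G (\<lambda>_. 0) = (\<lambda>_. 0)" by (rule zero)
    show "Kinf \<phi>" by (rule phi)
    show "\<And>s b. linf_pos s \<Longrightarrow> linf_pos b \<Longrightarrow> s \<le> omax b (?G s) \<Longrightarrow> supnorm s \<le> \<phi> (supnorm b)"
      by (rule mbi)
    show "\<And>r \<sigma>. r \<ge> 0 \<Longrightarrow> max_fixed_point (\<lambda>s. omax (\<lambda>_. r) (?G s)) \<sigma>
              \<Longrightarrow> semi_attractive_above (\<lambda>s. omax (\<lambda>_. r) (?G s)) \<sigma>"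
      using assms(3) by blast
  qed
  show ?thesis by (rule path_exists)
qed

end
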